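(* In the setting below, suppose that $x\mapsto f(x)+g(Ax)$ is bounded below and $\{x: x\in\operatorname{ri}(\operatorname{dom}f),\ Ax\in\operatorname{ri}(\operatorname{dom}g),\ Bx\le b\}\ne\emptyset$ ("$\operatorname{ri}$" omitted for polyhedral $f$ or $g$). Let $w^*=[y^*;z^*]$ be a local minimizer of $G_+^\mu(w)=\Xi(w)+\Psi_{+,\mu}(z)$ (for some $\mu>0$), let $T_*=\{i:z^*_i\ne0\}$, $\bar T_*=[r]\setminus T_*$, let $$\Omega_+:=\operatorname{argmin}_{w=[y;z]}\{\Xi(w):\ z_{\bar T_*}=0,\ z_{T_*}\ge0\},$$ and assume $w^*\in\operatorname{argmin}\{\|z\|_0:\ w=[y;z]\in\Omega_+\}$. Define $\eta_0:=\min_w\{\Xi(w): z_{\bar T_*}=0,\ z_{T_*}\ge0\}$, $\eta_1:=\min_{S\subsetneq T_*}\min_w\{\Xi(w): z_{\bar S}=0,\ z_S\ge0\}$, $\eta_2:=\min_{S\not\subseteq T_*}\min_w\{\Xi(w): z_{\bar S}=0,\ z_S\ge0\}$ (a minimum over an empty family of index sets being $+\infty$). If $\mu'\in\mathbb R^r$, $\mu'>0$, satisfies $\sum_{i\in T_*}\mu'_i\le\eta_1-\eta_0$ and $\mu'_j>\max\{\eta_1-\eta_2,0\}$ for all $j\in\bar T_*$, then $w^*$ is a global minimizer of $\Xi(w)+\Psi_{+,\mu'}(z)$.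
   Context: Let $f:\mathbb R^n\to(-\infty,\infty]$, $g:\mathbb R^m\to(-\infty,\infty]$ be proper, lsc and convex with conjugates $f^*,g^*$; $A\in\mathbb R^{m\times n}$, $B\in\mathbb R^{r\times n}$, $b\in\mathbb R^r$. For $w=[y;z]\in\mathbb R^m\times\mathbb R^r$, $\Xi(w)=f^*(-A^\top y-B^\top z)+g^*(y)+\langle b,z\rangle$; $\Psi_{+,\mu}(z)=\sum_{i=1}^r\mu_i\mathbf 1_{\{z_i\ne0\}}+\delta(z\mid\mathbb R^r_+)$. $\|z\|_0$ is the number of nonzero entries of $z$; $[r]=\{1,\dots,r\}$, $\bar S=[r]\setminus S$, $z_S$ the subvector indexed by $S$. $\operatorname{ri}$ denotes relative interior. *)

theory Defs
  imports "HOL-Analysis.Analysis"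
begin

definition epigraph :: "('a \<Rightarrow> ereal) \<Rightarrow> ('a \<times> real) set" where
  "epigraph f = {(x, t). f x \<le> ereal t}"

definition effdom :: "('a \<Rightarrow> ereal) \<Rightarrow> 'a set" where
  "effdom f = {x. f x < \<infinity>}"

definition proper_fun :: "('a \<Rightarrow> ereal) \<Rightarrow> bool" where
  "proper_fun f \<longleftrightarrow> (\<forall>x. f x \<noteq> -\<infinity>) \<and> (\<exists>x. f x < \<infinity>)"

definition convex_fun :: "('a::real_vector \<Rightarrow> ereal) \<Rightarrow> bool" where
  "convex_fun f \<longleftrightarrow> convex (epigraph f)"

definition lsc_fun :: "('a::topological_space \<Rightarrow> ereal) \<Rightarrow> bool" where
  "lsc_fun f \<longleftrightarrow> (\<forall>x. f x \<le> Liminf (at x) f)"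

definition polyhedral_fun :: "('a::euclidean_space \<Rightarrow> ereal) \<Rightarrow> bool" where
  "polyhedral_fun f \<longleftrightarrow> polyhedron (epigraph f)"

definition conj :: "('a::real_inner \<Rightarrow> ereal) \<Rightarrow> 'a \<Rightarrow> ereal" where
  "conj f u = (SUP x. ereal (u \<bullet> x) - f x)"

definition Xi :: "(real^'n \<Rightarrow> ereal) \<Rightarrow> (real^'m \<Rightarrow> ereal) \<Rightarrow> real^'n^'m \<Rightarrow> real^'n^'r
    \<Rightarrow> real^'r \<Rightarrow> real^'m \<Rightarrow> real^'r \<Rightarrow> ereal" where
  "Xi f g A B b y z = conj f (- (transpose A *v y) - (transpose B *v z)) + conj g y + ereal (b \<bullet> z)"

definition l0norm :: "real^'r \<Rightarrow> nat" where
  "l0norm z = card {i. z $ i \<noteq> 0}"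

definition Psi_plus :: "real^'r \<Rightarrow> real^'r \<Rightarrow> ereal" where
  "Psi_plus \<mu> z = (if \<forall>i. z $ i \<ge> 0 then ereal (\<Sum>i\<in>{i. z $ i \<noteq> 0}. \<mu> $ i) else \<infinity>)"

definition feas :: "'r set \<Rightarrow> ((real^'m) \<times> (real^'r)) set" where
  "feas S = {(y, z). (\<forall>i. i \<notin> S \<longrightarrow> z $ i = 0) \<and> (\<forall>i\<in>S. z $ i \<ge> 0)}"

text \<open>Infimum (the paper's min) of \<Xi> over feas S.\<close>
definition etaS :: "(real^'n \<Rightarrow> ereal) \<Rightarrow> (real^'m \<Rightarrow> ereal) \<Rightarrow> real^'n^'m \<Rightarrow> real^'n^'r
    \<Rightarrow> real^'r \<Rightarrow> 'r set \<Rightarrow> ereal" where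
  "etaS f g A B b S = (INF w\<in>feas S. Xi f g A B b (fst w) (snd w))"

end

theory Submission
  imports Defs
begin

lemma ar1:
  fixes e0 e1 :: ereal
  assumes "ereal s \<le> e1 - e0"
  shows "e0 + ereal s \<le> e1"
  using assms by (cases e0; cases e1) auto

lemma ar2:
  fixes e1 e2 :: ereal
  assumes "ereal m > max (e1 - e2) 0"
  shows "e1 \<le> e2 + ereal m"
  using assms by (cases e1; cases e2) (auto split: if_splits simp: max_def)

theorem mainTheorem18:
  fixes f :: "real^'n \<Rightarrow> ereal" and g :: "real^'m \<Rightarrow> ereal"
    and A :: "real^'n^'m" and B :: "real^'n^'r" and b :: "real^'r"
    and \<mu> \<mu>' :: "real^'r" and ystar :: "real^'m" and zstar :: "real^'r"
  assumes f: "proper_fun f" "lsc_fun f" "convex_fun f"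
    and g: "proper_fun g" "lsc_fun g" "convex_fun g"
    and bdd: "\<exists>c::real. \<forall>x. ereal c \<le> f x + g (A *v x)"
    and CQ: "\<exists>x. (if polyhedral_fun f then x \<in> effdom f else x \<in> rel_interior (effdom f))
              \<and> (if polyhedral_fun g then A *v x \<in> effdom g else A *v x \<in> rel_interior (effdom g))
              \<and> (\<forall>i. (B *v x) $ i \<le> b $ i)"
    and mu_pos: "\<forall>i. \<mu> $ i > 0"
    and locmin: "\<exists>\<epsilon>>0. \<forall>y z. dist (y, z) (ystar, zstar) < \<epsilon> \<longrightarrow>
                   Xi f g A B b ystar zstar + Psi_plus \<mu> zstar \<le> Xi f g A B b y z + Psi_plus \<mu> z"
    and T_def: "T = {i. zstar $ i \<noteq> 0}"
    and Omega_def: "Omega = {w \<in> feas T. \<forall>w'\<in>feas T.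
                       Xi f g A B b (fst w) (snd w) \<le> Xi f g A B b (fst w') (snd w')}"
    and sparsest: "(ystar, zstar) \<in> Omega" "\<forall>w\<in>Omega. l0norm zstar \<le> l0norm (snd w)"
    and eta0_def: "eta0 = etaS f g A B b T"
    and eta1_def: "eta1 = (INF S\<in>{S. S \<subset> T}. etaS f g A B b S)"
    and eta2_def: "eta2 = (INF S\<in>{S. \<not> S \<subseteq> T}. etaS f g A B b S)"
    and mu'_pos: "\<forall>i. \<mu>' $ i > 0"
    and mu'_T: "ereal (\<Sum>i\<in>T. \<mu>' $ i) \<le> eta1 - eta0"
    and mu'_Tbar: "\<forall>j. j \<notin> T \<longrightarrow> ereal (\<mu>' $ j) > max (eta1 - eta2) 0"
  shows "\<forall>y z. Xi f g A B b ystar zstar + Psi_plus \<mu>' zstar \<le> Xi f g A B b y z + Psi_plus \<mu>' z"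
proof (intro allI)
  fix y z
  let ?X = "Xi f g A B b"
  define V where "V = ?X ystar zstar"
  have inT: "(ystar, zstar) \<in> feas T" and minT: "\<forall>w'\<in>feas T. V \<le> ?X (fst w') (snd w')"
    using sparsest(1) unfolding Omega_def V_def by auto
  have Veta0: "V = eta0"
    unfolding eta0_def etaS_def
  proof (rule antisym)
    show "V \<le> (INF w\<in>feas T. ?X (fst w) (snd w))"
      using minT by (auto intro: INF_greatest)
    show "(INF w\<in>feas T. ?X (fst w) (snd w)) \<le> V"
      unfolding V_def using inT by (metis (no_types, lifting) INF_lower fst_conv snd_conv)
  qed
  have zpos: "\<forall>i. zstar $ i \<ge> 0" using inT unfolding feas_def by auto
  have LHS: "Psi_plus \<mu>' zstar = ereal (\<Sum>i\<in>T. \<mu>' $ i)"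
    using zpos unfolding Psi_plus_def T_def by simp
  have key: "V + ereal (\<Sum>i\<in>T. \<mu>' $ i) \<le> eta1"
    using ar1[OF mu'_T] Veta0 by simp
  show "?X ystar zstar + Psi_plus \<mu>' zstar \<le> ?X y z + Psi_plus \<mu>' z"
  proof (cases "\<forall>i. z $ i \<ge> 0")
    case False
    then have "Psi_plus \<mu>' z = \<infinity>" unfolding Psi_plus_def by auto
    then show ?thesis by simp
  next
    case True
    define S where "S = {i. z $ i \<noteq> 0}"
    have PS: "Psi_plus \<mu>' z = ereal (\<Sum>i\<in>S. \<mu>' $ i)"
      using True unfolding Psi_plus_def S_def by simp
    have inS: "(y, z) \<in> feas S" using True unfolding feas_def S_def by auto
    have XS: "etaS f g A B b S \<le> ?X y z"
      unfolding etaS_def using inS by (metis (no_types, lifting) INF_lower fst_conv snd_conv)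
    have sS: "0 \<le> (\<Sum>i\<in>S. \<mu>' $ i)" using mu'_pos by (simp add: sum_nonneg less_imp_le)
    have XleXS: "?X y z \<le> ?X y z + ereal (\<Sum>i\<in>S. \<mu>' $ i)"
      using add_mono[of "?X y z" "?X y z" 0 "ereal (\<Sum>i\<in>S. \<mu>' $ i)"] sS by simp
    show ?thesis
    proof (cases "S \<subseteq> T")
      case True
      show ?thesis
      proof (cases "S = T")
        case True
        have "V \<le> ?X y z" using XS True Veta0 eta0_def by simp
        then show ?thesis unfolding V_def[symmetric] LHS PS True by (simp add: add_right_mono)
      next
        case False
        with \<open>S \<subseteq> T\<close> have "S \<subset> T" by auto
        then have "eta1 \<le> etaS f g A B b S" unfolding eta1_def by (auto intro: INF_lower)
        then have "V + ereal (\<Sum>i\<in>T. \<mu>' $ i) \<le> ?X y z + ereal (\<Sum>i\<in>S. \<mu>' $ i)"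
          using key XS XleXS by (meson order_trans)
        then show ?thesis unfolding V_def LHS PS .
      qed
    next
      case False
      then obtain j where j: "j \<in> S" "j \<notin> T" by auto
      have "eta2 \<le> etaS f g A B b S" unfolding eta2_def using False by (auto intro: INF_lower)
      have mj: "\<mu>' $ j \<le> (\<Sum>i\<in>S. \<mu>' $ i)"
        using j mu'_pos by (intro member_le_sum) (auto simp: less_imp_le)
      have "eta1 \<le> eta2 + ereal (\<mu>' $ j)" using ar2 mu'_Tbar j by auto
      also have "\<dots> \<le> ?X y z + ereal (\<Sum>i\<in>S. \<mu>' $ i)"
        using \<open>eta2 \<le> etaS f g A B b S\<close> XS mj by (intro add_mono) auto
      finally have "V + ereal (\<Sum>i\<in>T. \<mu>' $ i) \<le> ?X y z + ereal (\<Sum>i\<in>S. \<mu>' $ i)"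
        using key by (meson order_trans)
      then show ?thesis unfolding V_def LHS PS .
    qed
  qed
qed

end
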